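(* Under the standing setting and assumptions (A1)–(A3) described in the context, assume $\mathcal A$ is strictly convex. Then the optimal payoff map $\mathcal R$ is lower semicontinuous at every $X\in\mathcal X$.
   Context: Let $\mathcal X$ be a Hausdorff, first countable, locally convex topological vector space over $\mathbb R$, partially ordered by a partial order $\geq$ with positive cone $\mathcal X_+=\{X\in\mathcal X: X\geq 0\}$. Let $\mathcal M\subset\mathcal X$ be a vector subspace with $1<\dim\mathcal M<\infty$, carrying the relative topology, and let $\pi:\mathcal M\to\mathbb R$ be linear. Standing assumptions: (A1) there is $U\in\mathcal M\cap\mathcal X_+$ with $\pi(U)=1$; (A2) $\mathcal A\subsetneq\mathcal X$ is closed, contains $0$, and satisfies $\mathcal A+\mathcal X_+\subset\mathcal A$; (A3) the map $\rho(X)=\inf\{\pi(Z): Z\in\mathcal M,\ X+Z\in\mathcal A\}$ is finitely valued and continuous on $\mathcal X$. The optimal payoff map is $\mathcal R(X)=\{Z\in\mathcal M: X+Z\in\mathcal A,\ \pi(Z)=\rho(X)\}$. $\mathcal A$ is strictly convex if $\lambda X+(1-\lambda)Y\in\mathrm{int}\,\mathcal A$ for all $\lambda\in(0,1)$ and all distinct $X,Y\in\mathcal A$. $\mathcal R$ is lower semicontinuous at $X$ if for every open $\mathcal U\subset\mathcal M$ with $\mathcal R(X)\cap\mathcal U\neq\emptyset$ there is an open neighborhood $\mathcal U_X$ of $X$ with $\mathcal R(Y)\cap\mathcal U\neq\emptyset$ for all $Y\in\mathcal U_X$. *)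

theory Defs
  imports "HOL-Analysis.Analysis"
begin

definition lc_tvs :: "('a::{real_vector, t2_space, first_countable_topology}) itself \<Rightarrow> bool" where
  "lc_tvs _ \<longleftrightarrow>
     continuous_on UNIV (\<lambda>(x::'a, y::'a). x + y) \<and>
     continuous_on UNIV (\<lambda>(c::real, x::'a). c *\<^sub>R x) \<and>
     (\<forall>U::'a set. open U \<and> 0 \<in> U \<longrightarrow> (\<exists>V. open V \<and> convex V \<and> 0 \<in> V \<and> V \<subseteq> U))"

definition vector_order :: "('a::real_vector \<Rightarrow> 'a \<Rightarrow> bool) \<Rightarrow> bool" where
  "vector_order ge \<longleftrightarrow>
     (\<forall>x. ge x x) \<and>
     (\<forall>x y z. ge x y \<longrightarrow> ge y z \<longrightarrow> ge x z) \<and>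
     (\<forall>x y. ge x y \<longrightarrow> ge y x \<longrightarrow> x = y) \<and>
     (\<forall>x y z. ge x y \<longrightarrow> ge (x + z) (y + z)) \<and>
     (\<forall>x y (c::real). c \<ge> 0 \<longrightarrow> ge x y \<longrightarrow> ge (c *\<^sub>R x) (c *\<^sub>R y))"

definition pos_cone :: "('a::real_vector \<Rightarrow> 'a \<Rightarrow> bool) \<Rightarrow> 'a set" where
  "pos_cone ge = {x. ge x 0}"

definition linear_on_sub :: "'a::real_vector set \<Rightarrow> ('a \<Rightarrow> real) \<Rightarrow> bool" where
  "linear_on_sub M \<pi> \<longleftrightarrow>
     (\<forall>x\<in>M. \<forall>y\<in>M. \<pi> (x + y) = \<pi> x + \<pi> y) \<and>
     (\<forall>x\<in>M. \<forall>c. \<pi> (c *\<^sub>R x) = c * \<pi> x)"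

definition rho :: "'a::real_vector set \<Rightarrow> ('a \<Rightarrow> real) \<Rightarrow> 'a set \<Rightarrow> 'a \<Rightarrow> real" where
  "rho M \<pi> A X = Inf {\<pi> Z | Z. Z \<in> M \<and> X + Z \<in> A}"

definition opt_payoff :: "'a::real_vector set \<Rightarrow> ('a \<Rightarrow> real) \<Rightarrow> 'a set \<Rightarrow> 'a \<Rightarrow> 'a set" where
  "opt_payoff M \<pi> A X = {Z \<in> M. X + Z \<in> A \<and> \<pi> Z = rho M \<pi> A X}"

definition strictly_convex_set :: "'a::{real_vector, topological_space} set \<Rightarrow> bool" where
  "strictly_convex_set A \<longleftrightarrow>
     (\<forall>X\<in>A. \<forall>Y\<in>A. X \<noteq> Y \<longrightarrow> (\<forall>l::real. 0 < l \<and> l < 1 \<longrightarrow> l *\<^sub>R X + (1 - l) *\<^sub>R Y \<in> interior A))"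

definition lsc_at :: "'a::topological_space set \<Rightarrow> ('a \<Rightarrow> 'a set) \<Rightarrow> 'a \<Rightarrow> bool" where
  "lsc_at M R X \<longleftrightarrow>
     (\<forall>U. openin (top_of_set M) U \<longrightarrow> R X \<inter> U \<noteq> {} \<longrightarrow>
        (\<exists>UX. open UX \<and> X \<in> UX \<and> (\<forall>Y\<in>UX. R Y \<inter> U \<noteq> {})))"

end

theory Submission imports Defs begin

lemma tvs_add_cont:
  fixes f g :: "'b::topological_space \<Rightarrow> 'a::{real_vector,t2_space,first_countable_topology}"
  assumes "lc_tvs TYPE('a)" "continuous_on S f" "continuous_on S g"
  shows "continuous_on S (\<lambda>x. f x + g x)"
proof -
  have c: "continuous_on UNIV (\<lambda>(x::'a,y). x+y)" using assms(1) by (simp add: lc_tvs_def)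
  have "continuous_on S (\<lambda>x. (f x, g x))" by (intro continuous_on_Pair assms)
  from continuous_on_compose2[OF c this] show ?thesis by auto
qed

lemma tvs_scale_cont:
  fixes f :: "'b::topological_space \<Rightarrow> real" and g :: "'b \<Rightarrow> 'a::{real_vector,t2_space,first_countable_topology}"
  assumes "lc_tvs TYPE('a)" "continuous_on S f" "continuous_on S g"
  shows "continuous_on S (\<lambda>x. f x *\<^sub>R g x)"
proof -
  have c: "continuous_on UNIV (\<lambda>(c::real,y::'a). c *\<^sub>R y)" using assms(1) by (simp add: lc_tvs_def)
  have "continuous_on S (\<lambda>x. (f x, g x))" by (intro continuous_on_Pair assms)
  from continuous_on_compose2[OF c this] show ?thesis by auto
qed

lemma tvs_sum_cont:
  fixes f :: "'c \<Rightarrow> 'b::topological_space \<Rightarrow> 'a::{real_vector,t2_space,first_countable_topology}"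
  assumes "lc_tvs TYPE('a)" "finite I" "\<And>i. i \<in> I \<Longrightarrow> continuous_on S (f i)"
  shows "continuous_on S (\<lambda>x. \<Sum>i\<in>I. f i x)"
  using assms(2,3)
proof (induction I rule: finite_induct)
  case empty
  then show ?case by (simp add: continuous_on_const)
next
  case (insert i I)
  then show ?case by (simp add: tvs_add_cont[OF assms(1)])
qed

lemma fun_nbhd:
  fixes G :: "('a \<Rightarrow> real) set"
  assumes "open G" "z0 \<in> G" "finite B"
  shows "\<exists>\<delta>>0. \<forall>w. (\<forall>v. v \<notin> B \<longrightarrow> w v = z0 v) \<longrightarrow> (\<forall>v\<in>B. \<bar>w v - z0 v\<bar> \<le> \<delta>) \<longrightarrow> w \<in> G"
proof -
  have "openin (product_topology (\<lambda>i. euclidean) UNIV) G" using assms(1) by (simp add: open_fun_def)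
  from product_topology_open_contains_basis[OF this assms(2)] obtain X where
    X: "z0 \<in> (\<Pi>\<^sub>E i\<in>UNIV. X i)" "\<forall>i. openin euclidean (X i)" "(\<Pi>\<^sub>E i\<in>UNIV. X i) \<subseteq> G"
    by blast
  have "\<forall>v. \<exists>e>0. ball (z0 v) e \<subseteq> X v"
    using X(1,2) by (metis PiE_iff UNIV_I open_contains_ball open_openin)
  then obtain e where e: "\<And>v. e v > 0" "\<And>v. ball (z0 v) (e v) \<subseteq> X v" by metis
  define \<delta> where "\<delta> = Min (insert 1 (e ` B)) / 2"
  have mpos: "Min (insert 1 (e ` B)) > 0" using assms(3) e(1) by (subst Min_gr_iff) auto
  have "\<delta> > 0" using mpos by (simp add: \<delta>_def)
  moreover have "w \<in> G" if w1: "\<forall>v. v \<notin> B \<longrightarrow> w v = z0 v" and w2: "\<forall>v\<in>B. \<bar>w v - z0 v\<bar> \<le> \<delta>" for w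
  proof -
    have "w v \<in> X v" for v
    proof (cases "v \<in> B")
      case True
      have "Min (insert 1 (e ` B)) \<le> e v" using True assms(3) by (intro Min_le) auto
      then have "\<bar>w v - z0 v\<bar> < e v" using w2 True mpos by (auto simp: \<delta>_def)
      then have "w v \<in> ball (z0 v) (e v)" by (simp add: dist_real_def abs_minus_commute)
      then show ?thesis using e(2) by blast
    next
      case False
      then show ?thesis using w1 X(1) by (auto simp: PiE_iff)
    qed
    then have "w \<in> (\<Pi>\<^sub>E i\<in>UNIV. X i)" by (auto simp: PiE_iff)
    then show ?thesis using X(3) by blast
  qed
  ultimately show ?thesis by blast
qed

lemma cube_compact:
  fixes a b :: "'a \<Rightarrow> real"
  shows "compact (PiE UNIV (\<lambda>v. {a v .. b v}))"
proof -
  have "compactin (product_topology (\<lambda>i. euclidean) UNIV) (PiE UNIV (\<lambda>v. {a v .. b v}))"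
    by (subst compactin_PiE) auto
  then show ?thesis by (simp add: euclidean_product_topology compactin_euclidean_iff)
qed

lemma P_closed: "closed {w::'a \<Rightarrow> real. \<forall>v. v \<notin> B \<longrightarrow> w v = 0}"
proof -
  have "{w::'a \<Rightarrow> real. \<forall>v. v \<notin> B \<longrightarrow> w v = 0} = (\<Inter>v\<in>-B. (\<lambda>w. w v) -` {0})" by auto
  moreover have "closed ((\<lambda>w::'a\<Rightarrow>real. w v) -` {0})" for v
    by (intro closed_vimage closed_singleton continuous_on_product_coordinates)
  ultimately show ?thesis by (auto intro: closed_INT)
qed

theorem mainTheorem5:
  fixes ge :: "'a::{real_vector, t2_space, first_countable_topology} \<Rightarrow> 'a \<Rightarrow> bool"
    and M :: "'a set" and \<pi> :: "'a \<Rightarrow> real" and A :: "'a set"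
  assumes tvs: "lc_tvs TYPE('a)"
    and ord: "vector_order ge"
    and M_sub: "subspace M"
    and M_fin: "\<exists>B. finite B \<and> span B = M"
    and M_dim: "1 < dim M"
    and pi_lin: "linear_on_sub M \<pi>"
    and A1: "\<exists>U\<in>M \<inter> pos_cone ge. \<pi> U = 1"
    and A2: "closed A" "A \<noteq> UNIV" "0 \<in> A" "\<forall>X\<in>A. \<forall>P\<in>pos_cone ge. X + P \<in> A"
    and A3_fin: "\<forall>X. {\<pi> Z | Z. Z \<in> M \<and> X + Z \<in> A} \<noteq> {} \<and> bdd_below {\<pi> Z | Z. Z \<in> M \<and> X + Z \<in> A}"
    and A3_cont: "continuous_on UNIV (rho M \<pi> A)"
    and sc: "strictly_convex_set A"
  shows "\<forall>X. lsc_at M (opt_payoff M \<pi> A) X"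
proof -
  obtain u where u: "u \<in> M" "ge u 0" "\<pi> u = 1" using A1 by (auto simp: pos_cone_def)
  have pi_add: "\<pi> (x + y) = \<pi> x + \<pi> y" if "x \<in> M" "y \<in> M" for x y
    using pi_lin that by (simp add: linear_on_sub_def)
  have pi_scale: "\<pi> (c *\<^sub>R x) = c * \<pi> x" if "x \<in> M" for x c
    using pi_lin that by (simp add: linear_on_sub_def)
  have pi0: "\<pi> 0 = 0" using pi_scale[OF u(1), of 0] by simp
  have pi_diff: "\<pi> (x - y) = \<pi> x - \<pi> y" if "x \<in> M" "y \<in> M" for x y
    using pi_add[of "x - y" y] that subspace_diff[OF M_sub] by simp
  have pi_sum: "\<pi> (\<Sum>i\<in>I. f i) = (\<Sum>i\<in>I. \<pi> (f i))" if "finite I" "\<forall>i\<in>I. f i \<in> M"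
    for I :: "'a set" and f :: "'a \<Rightarrow> 'a"
    using that
  proof (induction I rule: finite_induct)
    case empty then show ?case by (simp add: pi0)
  next
    case (insert i I)
    have "(\<Sum>i\<in>I. f i) \<in> M" using insert by (intro subspace_sum[OF M_sub]) auto
    then show ?case using insert by (simp add: pi_add)
  qed
  have u0: "u \<noteq> 0" using u pi0 by auto
  have cone: "ge (c *\<^sub>R u) 0" if "c \<ge> 0" for c
    using ord u(2) that unfolding vector_order_def by (metis scale_zero_right)
  have Aup: "x + c *\<^sub>R u \<in> A" if "x \<in> A" "c \<ge> 0" for x c
    using A2(4) that cone by (auto simp: pos_cone_def)
  have Aconv: "l *\<^sub>R x + (1 - l) *\<^sub>R y \<in> A" if "x \<in> A" "y \<in> A" "0 \<le> l" "l \<le> 1" for x y l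
  proof (cases "l = 0 \<or> l = 1 \<or> x = y")
    case True
    then show ?thesis using that by (auto simp: scaleR_add_left[symmetric])
  next
    case False
    then have "l *\<^sub>R x + (1 - l) *\<^sub>R y \<in> interior A"
      using sc that unfolding strictly_convex_set_def by auto
    then show ?thesis using interior_subset by blast
  qed
  have rho_le: "rho M \<pi> A Y \<le> \<pi> Z" if "Z \<in> M" "Y + Z \<in> A" for Y Z
    unfolding rho_def using A3_fin that by (intro cInf_lower) auto
  have rho_ge: "m \<le> rho M \<pi> A Y" if "\<And>Z. Z \<in> M \<Longrightarrow> Y + Z \<in> A \<Longrightarrow> m \<le> \<pi> Z" for Y m
    unfolding rho_def using A3_fin that by (intro cInf_greatest) auto
  have push: "\<exists>\<epsilon>>0. W - \<epsilon> *\<^sub>R u \<in> A" if "W \<in> interior A" for W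
  proof -
    have "continuous_on UNIV (\<lambda>t::real. W + (- t) *\<^sub>R u)"
      by (intro tvs_add_cont[OF tvs] tvs_scale_cont[OF tvs] continuous_intros)
    then have "open ((\<lambda>t::real. W + (- t) *\<^sub>R u) -` interior A)" by (intro open_vimage) auto
    moreover have "0 \<in> (\<lambda>t::real. W + (- t) *\<^sub>R u) -` interior A" using that by simp
    ultimately obtain e where e: "e > 0" "ball 0 e \<subseteq> (\<lambda>t::real. W + (- t) *\<^sub>R u) -` interior A"
      by (meson openE)
    have "e/2 \<in> ball 0 e" using e by auto
    from subsetD[OF e(2) this] have "W - (e/2) *\<^sub>R u \<in> interior A" by simp
    then show ?thesis using e interior_subset by (intro exI[of _ "e/2"]) auto
  qed
  have unique: "Z1 = Z2" if "Z1 \<in> opt_payoff M \<pi> A X" "Z2 \<in> opt_payoff M \<pi> A X" for X Z1 Z2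
  proof (rule ccontr)
    assume ne: "Z1 \<noteq> Z2"
    have h: "Z1 \<in> M" "Z2 \<in> M" "X + Z1 \<in> A" "X + Z2 \<in> A" "\<pi> Z1 = rho M \<pi> A X" "\<pi> Z2 = rho M \<pi> A X"
      using that by (auto simp: opt_payoff_def)
    define Zm where "Zm = (1/2) *\<^sub>R Z1 + (1/2) *\<^sub>R Z2"
    have ZmM: "Zm \<in> M" unfolding Zm_def using h M_sub by (intro subspace_add subspace_scale) auto
    have piZm: "\<pi> Zm = rho M \<pi> A X" unfolding Zm_def using h by (simp add: pi_add pi_scale subspace_scale[OF M_sub])
    have "(1/2::real) *\<^sub>R (X + Z1) + (1 - 1/2) *\<^sub>R (X + Z2) \<in> interior A"
      by (rule sc[unfolded strictly_convex_set_def, rule_format]) (use h(3,4) ne in auto)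
    moreover have "(1/2::real) *\<^sub>R (X + Z1) + (1 - 1/2) *\<^sub>R (X + Z2) = X + Zm"
    proof -
      have "(1/2::real) *\<^sub>R X + (1/2) *\<^sub>R X = X" by (simp add: scaleR_add_left[symmetric])
      then show ?thesis unfolding Zm_def by (simp add: algebra_simps)
    qed
    ultimately obtain \<epsilon> where \<epsilon>: "\<epsilon> > 0" "X + Zm - \<epsilon> *\<^sub>R u \<in> A" using push by metis
    have M2: "Zm - \<epsilon> *\<^sub>R u \<in> M" using ZmM u M_sub by (intro subspace_diff subspace_scale) auto
    have "rho M \<pi> A X \<le> \<pi> (Zm - \<epsilon> *\<^sub>R u)"
      using rho_le[OF M2] \<epsilon> by (simp add: algebra_simps)
    also have "\<dots> = rho M \<pi> A X - \<epsilon>" using piZm u ZmM subspace_scale[OF M_sub]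
      by (simp add: pi_diff pi_scale)
    finally show False using \<epsilon> by simp
  qed
  have shift: "x + \<epsilon> *\<^sub>R u \<in> interior A" if "x \<in> A" "\<epsilon> > 0" for x \<epsilon>
  proof -
    have a1: "x + (2*\<epsilon>) *\<^sub>R u \<in> A" using Aup that by simp
    have a2: "x \<noteq> x + (2*\<epsilon>) *\<^sub>R u" using u0 that by simp
    have "(1/2::real) *\<^sub>R x + (1 - 1/2) *\<^sub>R (x + (2*\<epsilon>) *\<^sub>R u) \<in> interior A"
      by (rule sc[unfolded strictly_convex_set_def, rule_format]) (use that a1 a2 in auto)
    moreover have "(1/2::real) *\<^sub>R x + (1 - 1/2) *\<^sub>R (x + (2*\<epsilon>) *\<^sub>R u) = x + \<epsilon> *\<^sub>R u"
    proof -
      have "(1/2::real) *\<^sub>R x + (1/2) *\<^sub>R x = x" by (simp add: scaleR_add_left[symmetric])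
      then show ?thesis by (simp add: algebra_simps)
    qed
    ultimately show ?thesis by simp
  qed
  obtain B where B: "B \<subseteq> M" "independent B" "M \<subseteq> span B" "card B = dim M"
    by (rule basis_exists)
  have finB: "finite B" using B(4) M_dim by (metis card.infinite not_less_zero less_trans zero_less_one)
  define \<phi> where "\<phi> = (\<lambda>w::'a \<Rightarrow> real. \<Sum>v\<in>B. w v *\<^sub>R v)"
  define P where "P = {w::'a\<Rightarrow>real. \<forall>v. v \<notin> B \<longrightarrow> w v = 0}"
  have phiM: "\<phi> w \<in> M" for w
    unfolding \<phi>_def using B(1) by (intro subspace_sum[OF M_sub] subspace_scale[OF M_sub]) auto
  have pi_phi: "\<pi> (\<phi> w) = (\<Sum>v\<in>B. w v * \<pi> v)" for w
  proof -
    have "\<pi> (\<phi> w) = (\<Sum>v\<in>B. \<pi> (w v *\<^sub>R v))" unfolding \<phi>_def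
      by (rule pi_sum) (use finB B(1) subspace_scale[OF M_sub] in auto)
    also have "\<dots> = (\<Sum>v\<in>B. w v * \<pi> v)" using B(1) by (intro sum.cong) (auto simp: pi_scale)
    finally show ?thesis .
  qed
  have phi_onto: "\<exists>w\<in>P. \<phi> w = Z" if "Z \<in> M" for Z
  proof -
    have "Z \<in> span B" using B(3) that by auto
    then obtain c where c: "Z = (\<Sum>v\<in>B. c v *\<^sub>R v)" using span_finite[OF finB] by auto
    define w where "w = (\<lambda>v. if v \<in> B then c v else 0)"
    have "w \<in> P" by (simp add: w_def P_def)
    moreover have "\<phi> w = Z" unfolding \<phi>_def c w_def by (intro sum.cong) auto
    ultimately show ?thesis by blast
  qed
  have phi_lin: "\<phi> (\<lambda>v. a * w v + b * w' v) = a *\<^sub>R \<phi> w + b *\<^sub>R \<phi> w'" for a b w w'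
    unfolding \<phi>_def by (simp add: scaleR_add_left sum.distrib scaleR_sum_right)
  have phi_inj: "w = w'" if "w \<in> P" "w' \<in> P" "\<phi> w = \<phi> w'" for w w'
  proof -
    have "(\<Sum>v\<in>B. (w v - w' v) *\<^sub>R v) = 0" using that(3) unfolding \<phi>_def
      by (simp add: scaleR_diff_left sum_subtractf)
    then have "w v - w' v = 0" if "v \<in> B" for v
      using independentD[OF B(2) finB subset_refl, of "\<lambda>v. w v - w' v"] that by blast
    then have eqB: "w v = w' v" if "v \<in> B" for v using that by simp
    show "w = w'"
    proof
      fix v show "w v = w' v" using eqB[of v] that(1,2) by (cases "v \<in> B") (auto simp: P_def)
    qed
  qed
  have phi_cont: "continuous_on UNIV \<phi>" unfolding \<phi>_def
    by (intro tvs_sum_cont[OF tvs finB] tvs_scale_cont[OF tvs] continuous_on_product_coordinates continuous_on_const)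
  have pphi_eq: "(\<lambda>w. \<pi> (\<phi> w)) = (\<lambda>w. \<Sum>v\<in>B. w v * \<pi> v)" by (simp add: pi_phi)
  have pphi_cont: "continuous_on UNIV (\<lambda>w. \<pi> (\<phi> w))" unfolding pphi_eq
    by (intro continuous_on_sum continuous_on_mult continuous_on_product_coordinates continuous_on_const)
  have P_cl: "closed P" unfolding P_def by (rule P_closed)
  show ?thesis
    unfolding lsc_at_def
  proof (intro allI impI)
    fix X Uo
    assume Uo: "openin (top_of_set M) Uo" and ne: "opt_payoff M \<pi> A X \<inter> Uo \<noteq> {}"
    obtain Z0 where Z0: "Z0 \<in> opt_payoff M \<pi> A X" "Z0 \<in> Uo" using ne by auto
    have Z0': "Z0 \<in> M" "X + Z0 \<in> A" "\<pi> Z0 = rho M \<pi> A X" using Z0(1) by (auto simp: opt_payoff_def)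
    obtain Oo where O: "open Oo" "Uo = M \<inter> Oo" using Uo by (auto simp: openin_open)
    obtain z0 where z0: "z0 \<in> P" "\<phi> z0 = Z0" using phi_onto Z0'(1) by blast
    define G where "G = \<phi> -` Oo"
    have "open G" unfolding G_def by (intro open_vimage O(1) phi_cont)
    moreover have "z0 \<in> G" using z0 Z0(2) O(2) by (auto simp: G_def)
    ultimately obtain \<delta> where \<delta>: "\<delta> > 0"
      "\<And>w. (\<forall>v. v \<notin> B \<longrightarrow> w v = z0 v) \<Longrightarrow> (\<forall>v\<in>B. \<bar>w v - z0 v\<bar> \<le> \<delta>) \<Longrightarrow> w \<in> G"
      using fun_nbhd[OF _ _ finB] by blast
    define N where "N = (\<lambda>w::'a\<Rightarrow>real. \<Sum>v\<in>B. \<bar>w v - z0 v\<bar>)"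
    have N_cont: "continuous_on UNIV N" unfolding N_def
      by (intro continuous_on_sum continuous_on_rabs continuous_on_diff continuous_on_product_coordinates continuous_on_const)
    have N_coord: "\<bar>w v - z0 v\<bar> \<le> N w" if "v \<in> B" for w v
      unfolding N_def using finB that by (intro member_le_sum) auto
    define cube where "cube = PiE UNIV (\<lambda>v. {(if v\<in>B then z0 v - \<delta> else 0) .. (if v\<in>B then z0 v + \<delta> else 0)})"
    have cube_c: "compact cube" unfolding cube_def by (rule cube_compact)
    have in_cube: "w \<in> cube" if "w \<in> P" "N w \<le> \<delta>" for w
    proof -
      have "w v \<in> {(if v\<in>B then z0 v - \<delta> else 0) .. (if v\<in>B then z0 v + \<delta> else 0)}" for v
      proof (cases "v \<in> B")
        case True
        then show ?thesis using N_coord[OF True, of w] that(2) by (auto simp: abs_le_iff)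
      next
        case False
        then show ?thesis using that(1) by (auto simp: P_def)
      qed
      then show ?thesis by (simp add: cube_def PiE_iff)
    qed
    define Sph where "Sph = P \<inter> {w. N w = \<delta>}"
    have Sph_c: "compact Sph"
    proof -
      have "Sph = cube \<inter> Sph" using in_cube by (auto simp: Sph_def)
      moreover have "closed Sph" unfolding Sph_def
        using P_cl closed_vimage[OF closed_singleton N_cont, of \<delta>] by (auto simp: vimage_def)
      ultimately show ?thesis using cube_c by (metis compact_Int_closed)
    qed
    define c0 where "c0 = rho M \<pi> A X"
    have Xcl: "closed {w. X + \<phi> w \<in> A}"
      using closed_vimage[OF A2(1) tvs_add_cont[OF tvs continuous_on_const phi_cont, of X]] by (simp add: vimage_def)
    have gap: "\<exists>\<eta>>0. \<forall>w\<in>Sph. X + \<phi> w \<in> A \<longrightarrow> c0 + \<eta> < \<pi> (\<phi> w)"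
    proof (cases "Sph \<inter> {w. X + \<phi> w \<in> A} = {}")
      case True
      then show ?thesis by (intro exI[of _ 1]) auto
    next
      case False
      have "compact (Sph \<inter> {w. X + \<phi> w \<in> A})" using Sph_c Xcl by (rule compact_Int_closed)
      then obtain w1 where w1: "w1 \<in> Sph \<inter> {w. X + \<phi> w \<in> A}"
        "\<forall>w\<in>Sph \<inter> {w. X + \<phi> w \<in> A}. \<pi> (\<phi> w1) \<le> \<pi> (\<phi> w)"
        using continuous_attains_inf[OF _ False, of "\<lambda>w. \<pi> (\<phi> w)"] continuous_on_subset[OF pphi_cont] by blast
      have "N z0 = 0" by (simp add: N_def)
      then have "w1 \<noteq> z0" using w1(1) \<delta>(1) by (auto simp: Sph_def)
      then have ne1: "\<phi> w1 \<noteq> Z0" using phi_inj z0 w1(1) by (auto simp: Sph_def)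
      have ge1: "c0 \<le> \<pi> (\<phi> w1)" using rho_le[OF phiM] w1(1) by (auto simp: c0_def)
      have "c0 \<noteq> \<pi> (\<phi> w1)"
      proof
        assume "c0 = \<pi> (\<phi> w1)"
        then have "\<phi> w1 \<in> opt_payoff M \<pi> A X" using phiM w1(1) by (auto simp: opt_payoff_def c0_def)
        then show False using unique Z0(1) ne1 by blast
      qed
      then have lt: "c0 < \<pi> (\<phi> w1)" using ge1 by simp
      show ?thesis
      proof (intro exI[of _ "(\<pi> (\<phi> w1) - c0) / 2"] conjI ballI impI)
        show "(\<pi> (\<phi> w1) - c0) / 2 > 0" using lt by simp
        fix w assume "w \<in> Sph" "X + \<phi> w \<in> A"
        then have "\<pi> (\<phi> w1) \<le> \<pi> (\<phi> w)" using w1(2) by blast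
        then show "c0 + (\<pi> (\<phi> w1) - c0) / 2 < \<pi> (\<phi> w)" using lt by (simp add: field_simps)
      qed
    qed
    then obtain \<eta> where \<eta>: "\<eta> > 0" "\<And>w. w \<in> Sph \<Longrightarrow> X + \<phi> w \<in> A \<Longrightarrow> c0 + \<eta> < \<pi> (\<phi> w)" by blast
    define C where "C = Sph \<inter> {w. \<pi> (\<phi> w) \<le> c0 + \<eta>}"
    have C_c: "compact C" unfolding C_def
      by (intro compact_Int_closed Sph_c closed_Collect_le pphi_cont continuous_on_const)
    define F where "F = (\<lambda>p::'a \<times> ('a\<Rightarrow>real). fst p + \<phi> (snd p))"
    have "continuous_on UNIV (\<lambda>p::'a \<times> ('a\<Rightarrow>real). \<phi> (snd p))"
      by (rule continuous_on_compose2[OF phi_cont continuous_on_snd[OF continuous_on_id]]) auto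
    then have F_cont: "continuous_on UNIV F" unfolding F_def
      by (intro tvs_add_cont[OF tvs] continuous_on_fst[OF continuous_on_id])
    define W where "W = - (F -` A)"
    have W_open: "open W" unfolding W_def using closed_vimage[OF A2(1) F_cont] by (simp add: open_Compl)
    have "{X} \<times> C \<subseteq> W"
    proof
      fix p assume "p \<in> {X} \<times> C"
      then obtain w where p: "p = (X, w)" "w \<in> Sph" "\<pi> (\<phi> w) \<le> c0 + \<eta>" by (auto simp: C_def)
      then have "X + \<phi> w \<notin> A" using \<eta>(2)[of w] by fastforce
      then show "p \<in> W" using p by (simp add: W_def F_def)
    qed
    from Elementary_Topology.tube_lemma[OF C_c W_open this] obtain V1 where V1: "X \<in> V1" "open V1" "V1 \<times> C \<subseteq> W" by blast
    obtain uc where uc: "uc \<in> P" "\<phi> uc = u" using phi_onto u(1) by blast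
    define s where "s = (\<Sum>v\<in>B. \<bar>uc v\<bar>)"
    have s0: "s \<ge> 0" unfolding s_def by (simp add: sum_nonneg)
    define \<epsilon> where "\<epsilon> = min (\<eta>/2) (\<delta> / (2*(s+1)))"
    have \<epsilon>pos: "\<epsilon> > 0" using \<eta> \<delta> s0 by (simp add: \<epsilon>_def)
    define z1 where "z1 = (\<lambda>v. 1 * z0 v + \<epsilon> * uc v)"
    have z1P: "z1 \<in> P" using z0 uc by (auto simp: P_def z1_def)
    have phi_z1: "\<phi> z1 = Z0 + \<epsilon> *\<^sub>R u" unfolding z1_def phi_lin using z0 uc by simp
    have N_z1: "N z1 < \<delta>"
    proof -
      have "N z1 = \<epsilon> * s" unfolding N_def z1_def s_def using \<epsilon>pos
        by (simp add: abs_mult sum_distrib_left)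
      also have "\<dots> \<le> (\<delta> / (2*(s+1))) * s" using s0 by (intro mult_right_mono) (auto simp: \<epsilon>_def)
      also have "\<dots> < \<delta>" using \<delta>(1) s0 by (simp add: field_simps add_nonneg_pos)
      finally show ?thesis .
    qed
    have pi_z1: "\<pi> (\<phi> z1) = c0 + \<epsilon>" unfolding phi_z1 using Z0' u subspace_scale[OF M_sub]
      by (simp add: pi_add pi_scale c0_def)
    define V3 where "V3 = (\<lambda>Y. Y + (Z0 + \<epsilon> *\<^sub>R u)) -` interior A"
    have V3_open: "open V3" unfolding V3_def
      by (intro open_vimage open_interior tvs_add_cont[OF tvs continuous_on_id continuous_on_const])
    have XV3: "X \<in> V3" using shift[OF Z0'(2) \<epsilon>pos] by (simp add: V3_def add.assoc)
    show "\<exists>UX. open UX \<and> X \<in> UX \<and> (\<forall>Y\<in>UX. opt_payoff M \<pi> A Y \<inter> Uo \<noteq> {})"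
    proof (intro exI[of _ "V1 \<inter> V3"] conjI ballI)
      show "open (V1 \<inter> V3)" using V1 V3_open by auto
      show "X \<in> V1 \<inter> V3" using V1 XV3 by auto
      fix Y assume Y: "Y \<in> V1 \<inter> V3"
      define T where "T = {w. w \<in> P \<and> Y + \<phi> w \<in> A \<and> \<pi> (\<phi> w) \<le> c0 + \<eta>}"
      have z1T: "z1 \<in> T"
      proof -
        have "Y + \<phi> z1 \<in> interior A" using Y by (simp add: V3_def phi_z1)
        moreover have "\<epsilon> \<le> \<eta>" using \<eta>(1) by (simp add: \<epsilon>_def)
        ultimately show ?thesis using z1P pi_z1 interior_subset by (auto simp: T_def)
      qed
      have TN: "N w < \<delta>" if wT: "w \<in> T" for w
      proof (rule ccontr)
        assume "\<not> N w < \<delta>"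
        then have Nw: "\<delta> \<le> N w" by simp
        define g where "g = (\<lambda>t::real. (\<lambda>v. (1-t) * z1 v + t * w v))"
        have hc: "continuous_on {0..1} (\<lambda>t. N (g t))" unfolding N_def g_def by (intro continuous_intros)
        have g0: "g 0 = z1" and g1: "g 1 = w" by (auto simp: g_def)
        have "N (g 0) \<le> \<delta>" "\<delta> \<le> N (g 1)" using N_z1 Nw g0 g1 by auto
        from IVT'[of "\<lambda>t. N (g t)", OF this _ hc] obtain t where t: "0 \<le> t" "t \<le> 1" "N (g t) = \<delta>"
          by auto
        have wP: "w \<in> P" "Y + \<phi> w \<in> A" "\<pi> (\<phi> w) \<le> c0 + \<eta>" using wT by (auto simp: T_def)
        have z1T': "Y + \<phi> z1 \<in> A" "\<pi> (\<phi> z1) \<le> c0 + \<eta>" using z1T by (auto simp: T_def)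
        have gP: "g t \<in> P" using z1P wP(1) by (auto simp: P_def g_def)
        have phig: "\<phi> (g t) = (1-t) *\<^sub>R \<phi> z1 + t *\<^sub>R \<phi> w" unfolding g_def by (rule phi_lin)
        have "Y + \<phi> (g t) = (1-t) *\<^sub>R (Y + \<phi> z1) + (1 - (1-t)) *\<^sub>R (Y + \<phi> w)"
          by (simp add: phig algebra_simps)
        then have gA: "Y + \<phi> (g t) \<in> A" using Aconv[OF z1T'(1) wP(2), of "1-t"] t by simp
        have "\<pi> (\<phi> (g t)) = (1-t) * \<pi> (\<phi> z1) + t * \<pi> (\<phi> w)"
          unfolding phig using phiM subspace_scale[OF M_sub] by (simp add: pi_add pi_scale)
        also have "\<dots> \<le> (1-t) * (c0 + \<eta>) + t * (c0 + \<eta>)"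
          using t z1T'(2) wP(3) by (intro add_mono mult_left_mono) auto
        also have "\<dots> = c0 + \<eta>" by (simp add: algebra_simps)
        finally have "g t \<in> C" using gP t(3) by (auto simp: C_def Sph_def)
        then have "(Y, g t) \<in> W" using V1(3) Y by blast
        then show False using gA by (simp add: W_def F_def)
      qed
      have T_c: "compact T"
      proof -
        have "T = cube \<inter> T" using in_cube TN by (auto simp: T_def less_imp_le)
        moreover have "closed T"
        proof -
          have "T = P \<inter> ((\<lambda>w. Y + \<phi> w) -` A) \<inter> {w. \<pi> (\<phi> w) \<le> c0 + \<eta>}" by (auto simp: T_def)
          moreover have "closed ((\<lambda>w. Y + \<phi> w) -` A)"
            by (intro closed_vimage A2(1) tvs_add_cont[OF tvs continuous_on_const phi_cont])
          moreover have "closed {w. \<pi> (\<phi> w) \<le> c0 + \<eta>}"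
            by (intro closed_Collect_le pphi_cont continuous_on_const)
          ultimately show ?thesis using P_cl by (metis closed_Int)
        qed
        ultimately show ?thesis using cube_c by (metis compact_Int_closed)
      qed
      have "T \<noteq> {}" using z1T by blast
      from continuous_attains_inf[OF T_c this continuous_on_subset[OF pphi_cont]]
      obtain ws where ws: "ws \<in> T" "\<forall>w\<in>T. \<pi> (\<phi> ws) \<le> \<pi> (\<phi> w)" by blast
      have a: "\<phi> ws \<in> M" "Y + \<phi> ws \<in> A" using phiM ws(1) by (auto simp: T_def)
      have b: "\<pi> (\<phi> ws) = rho M \<pi> A Y"
      proof (rule antisym)
        show "rho M \<pi> A Y \<le> \<pi> (\<phi> ws)" using rho_le a by blast
        show "\<pi> (\<phi> ws) \<le> rho M \<pi> A Y"
        proof (rule rho_ge)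
          fix Z assume Z: "Z \<in> M" "Y + Z \<in> A"
          show "\<pi> (\<phi> ws) \<le> \<pi> Z"
          proof (cases "\<pi> Z \<le> c0 + \<eta>")
            case True
            obtain w where w: "w \<in> P" "\<phi> w = Z" using phi_onto Z(1) by blast
            then have "w \<in> T" using Z True by (auto simp: T_def)
            then show ?thesis using ws(2) w by blast
          next
            case False
            then show ?thesis using ws(1) by (auto simp: T_def)
          qed
        qed
      qed
      have c: "\<phi> ws \<in> Uo"
      proof -
        have "ws \<in> G"
        proof (rule \<delta>(2))
          show "\<forall>v. v \<notin> B \<longrightarrow> ws v = z0 v" using ws(1) z0(1) by (auto simp: T_def P_def)
          show "\<forall>v\<in>B. \<bar>ws v - z0 v\<bar> \<le> \<delta>" using N_coord TN[OF ws(1)] by (meson less_imp_le order_trans)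
        qed
        then show ?thesis using O(2) phiM by (auto simp: G_def)
      qed
      have "\<phi> ws \<in> opt_payoff M \<pi> A Y \<inter> Uo" using a b c by (auto simp: opt_payoff_def)
      then show "opt_payoff M \<pi> A Y \<inter> Uo \<noteq> {}" by blast
    qed
  qed
qed

end
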